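(* Let $\Gamma,\Gamma'$ be graphs. The assignment $\Phi\mapsto(s(\Phi),t(\Phi))$ is a bijection between graph morphisms $\Phi:\Gamma\to\Gamma'$ and pairs $(\phi_L,\phi_R)$ of morphisms of $\mathrm{Agg}$, $\phi_L:\mathrm{agg}(\Gamma)\to\mathrm{agg}(\Gamma')$ and $\phi_R:\Gamma/\Gamma\to\Gamma'/\Gamma'$, satisfying $\phi_R\circ\mathrm v_\Gamma=\mathrm v_{\Gamma'}\circ\phi_L$. (In particular, for every $\Phi$ the square with sides $s(\Phi),t(\Phi),\mathrm v_\Gamma,\mathrm v_{\Gamma'}$ commutes.)
   Context: A graph $\Gamma=(F,V,\partial,\imath)$ consists of finite sets $F$ (flags) and $V$ (vertices), a map $\partial:F\to V$ and an involution $\imath$ of $F$. The two-element orbits of $\imath$ are the edges, the fixed points the outer flags. A graph morphism $\phi:\Gamma\to\Gamma'=(F',V',\partial',\imath')$ is a triple $(\phi_V,\phi^F,\imath_\phi)$ with $\phi_V:V\to V'$ surjective, $\phi^F:F'\to F$ injective and $\imath_\phi$ a fixed-point-free involution of $F\setminus\phi^F(F')$, such that: (i) $\phi_V\partial\phi^F=\partial'$ and $\phi_V\partial(f)=\phi_V\partial(\imath_\phi f)$ for $f\notin\phi^F(F')$; (ii) for $f\notin\phi^F(F')$, either $\{f,\imath f\}$ is an edge of $\Gamma$ and $\imath_\phi f=\imath f$, or $f$ and $\imath_\phi f$ are both outer flags of $\Gamma$; (iii) if $f'\in F'$ and $\phi^F(f')$ lies on an edge of $\Gamma$, then $\imath(\phi^F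 f')=\phi^F(\imath' f')$. Composition: $(\psi\phi)_V=\psi_V\phi_V$, $(\psi\phi)^F=\phi^F\psi^F$, $\imath_{\psi\phi}$ equals $\imath_\phi$ off $\phi^F(F')$ and $\phi^F\imath_\psi(\phi^F)^{-1}$ on $\phi^F(F'\setminus\psi^F(F''))$. An aggregate is a graph with $\imath=\mathrm{id}$; $\mathrm{Agg}$ is the full subcategory of aggregates. For a graph $\Gamma$: the total dissection is $\mathrm{agg}(\Gamma)=(F,V,\partial,\mathrm{id})$; the total contraction $\Gamma/\Gamma$ is the aggregate whose vertices are the connected components of $\Gamma$ and whose flags are the outer flags of $\Gamma$, each attached to its component. $\mathrm v_\Gamma:\mathrm{agg}(\Gamma)\to\Gamma/\Gamma$ is the morphism (component map $V\to\pi_0(\Gamma)$, inclusion of outer flags into $F$, involution $\imath$ on the inner flags), i.e. grafting of all edges followed by contraction of all edges. For $\Phi:\Gamma\to\Gamma'$: $s(\Phi):\mathrm{agg}(\Gamma)\to\mathrm{agg}(\Gamma')$ is the triple $(\Phi_V,\Phi^F,\imath_\Phi)$. $t(\Phi):\Gamma/\Gamma\to\Gamma'/\Gamma'$ has vertex map induced by $\Phi_V$ on connected components, flag map the restriction of $\Phi^F$ to the outer flags of $\Gamma'$, and involution on the remaining outer flags $f$ of $\Gamma$ given by $\imath_\Phi(f)$ if $f\notin\Phi^F(F')$ and by $\Phi^F(\imath'((\Phi^F)^{-1}f))$ if $f=\Phi^F(f')$ with $f'$ an inner flag of $\Gamma'$. *)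

theory Defs
  imports Main "HOL-Library.FuncSet"
begin

text \<open>A graph (F, V, bd, inv). Functions are only meaningful on the carriers.\<close>
record ('f, 'v) graph =
  flags :: "'f set"
  verts :: "'v set"
  bd    :: "'f \<Rightarrow> 'v"
  inv   :: "'f \<Rightarrow> 'f"

definition is_graph :: "('f, 'v) graph \<Rightarrow> bool" where
  "is_graph G \<longleftrightarrow> finite (flags G) \<and> finite (verts G)
     \<and> bd G \<in> flags G \<rightarrow> verts G
     \<and> inv G \<in> flags G \<rightarrow> flags G
     \<and> (\<forall>f\<in>flags G. inv G (inv G f) = f)"

definition outer :: "('f, 'v) graph \<Rightarrow> 'f set" where
  "outer G = {f \<in> flags G. inv G f = f}"

definition inner :: "('f, 'v) graph \<Rightarrow> 'f set" where
  "inner G = {f \<in> flags G. inv G f \<noteq> f}"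

definition is_aggregate :: "('f, 'v) graph \<Rightarrow> bool" where
  "is_aggregate G \<longleftrightarrow> is_graph G \<and> (\<forall>f\<in>flags G. inv G f = f)"

text \<open>A morphism G \<rightarrow> G' is a triple (phi_V, phi^F, i_phi); the component functions
  are taken extensional (undefined off their domains) so that equality of
  morphisms is equality of the mathematical triples.\<close>
record ('v1, 'v2, 'f1, 'f2) gmor =
  mV :: "'v1 \<Rightarrow> 'v2"
  mF :: "'f2 \<Rightarrow> 'f1"
  mI :: "'f1 \<Rightarrow> 'f1"

definition is_morphism ::
  "('f1, 'v1) graph \<Rightarrow> ('f2, 'v2) graph \<Rightarrow> ('v1, 'v2, 'f1, 'f2) gmor \<Rightarrow> bool" where
  "is_morphism G G' \<phi> \<longleftrightarrow>
     (let X = flags G - mF \<phi> ` flags G' in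
       mV \<phi> \<in> verts G \<rightarrow>\<^sub>E verts G' \<and> mV \<phi> ` verts G = verts G'
     \<and> mF \<phi> \<in> flags G' \<rightarrow>\<^sub>E flags G \<and> inj_on (mF \<phi>) (flags G')
     \<and> mI \<phi> \<in> X \<rightarrow>\<^sub>E X
     \<and> (\<forall>f\<in>X. mI \<phi> f \<noteq> f \<and> mI \<phi> (mI \<phi> f) = f)
     \<comment> \<open>(i)\<close>
     \<and> (\<forall>f'\<in>flags G'. mV \<phi> (bd G (mF \<phi> f')) = bd G' f')
     \<and> (\<forall>f\<in>X. mV \<phi> (bd G f) = mV \<phi> (bd G (mI \<phi> f)))
     \<comment> \<open>(ii)\<close>
     \<and> (\<forall>f\<in>X. (inv G f \<noteq> f \<and> mI \<phi> f = inv G f)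
               \<or> (inv G f = f \<and> inv G (mI \<phi> f) = mI \<phi> f))
     \<comment> \<open>(iii)\<close>
     \<and> (\<forall>f'\<in>flags G'. inv G (mF \<phi> f') \<noteq> mF \<phi> f' \<longrightarrow>
                        inv G (mF \<phi> f') = mF \<phi> (inv G' f')))"

definition gcomp ::
  "('f1, 'v1) graph \<Rightarrow> ('f2, 'v2) graph \<Rightarrow> ('f3, 'v3) graph \<Rightarrow>
   ('v2, 'v3, 'f2, 'f3) gmor \<Rightarrow> ('v1, 'v2, 'f1, 'f2) gmor \<Rightarrow> ('v1, 'v3, 'f1, 'f3) gmor" where
  "gcomp G G' G'' \<psi> \<phi> =
     \<lparr> mV = restrict (mV \<psi> \<circ> mV \<phi>) (verts G),
       mF = restrict (mF \<phi> \<circ> mF \<psi>) (flags G''),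
       mI = (\<lambda>f. if f \<in> flags G - mF \<phi> ` flags G' then mI \<phi> f
                 else if f \<in> mF \<phi> ` (flags G' - mF \<psi> ` flags G'')
                 then mF \<phi> (mI \<psi> (inv_into (flags G') (mF \<phi>) f))
                 else undefined) \<rparr>"

definition agg :: "('f, 'v) graph \<Rightarrow> ('f, 'v) graph" where
  "agg G = G\<lparr>inv := id\<rparr>"

definition adj :: "('f, 'v) graph \<Rightarrow> ('v \<times> 'v) set" where
  "adj G = {(bd G f, bd G (inv G f)) | f. f \<in> flags G}"

definition conn :: "('f, 'v) graph \<Rightarrow> ('v \<times> 'v) set" where
  "conn G = (adj G \<union> (adj G)\<inverse> \<union> Id_on (verts G))\<^sup>*"

definition comp_of :: "('f, 'v) graph \<Rightarrow> 'v \<Rightarrow> 'v set" where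
  "comp_of G v = conn G `` {v}"

definition components :: "('f, 'v) graph \<Rightarrow> 'v set set" where
  "components G = comp_of G ` verts G"

definition quot :: "('f, 'v) graph \<Rightarrow> ('f, 'v set) graph" where
  "quot G = \<lparr> flags = outer G, verts = components G,
              bd = (\<lambda>f. comp_of G (bd G f)), inv = id \<rparr>"

definition vmor :: "('f, 'v) graph \<Rightarrow> ('v, 'v set, 'f, 'f) gmor" where
  "vmor G = \<lparr> mV = restrict (comp_of G) (verts G),
              mF = restrict id (outer G),
              mI = restrict (inv G) (inner G) \<rparr>"

definition smor :: "('v1, 'v2, 'f1, 'f2) gmor \<Rightarrow> ('v1, 'v2, 'f1, 'f2) gmor" where
  "smor \<Phi> = \<lparr> mV = mV \<Phi>, mF = mF \<Phi>, mI = mI \<Phi> \<rparr>"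

definition tmor :: "('f1, 'v1) graph \<Rightarrow> ('f2, 'v2) graph \<Rightarrow>
    ('v1, 'v2, 'f1, 'f2) gmor \<Rightarrow> ('v1 set, 'v2 set, 'f1, 'f2) gmor" where
  "tmor G G' \<Phi> =
     \<lparr> mV = restrict (\<lambda>C. comp_of G' (mV \<Phi> (SOME v. v \<in> C))) (components G),
       mF = restrict (mF \<Phi>) (outer G'),
       mI = restrict (\<lambda>f. if f \<notin> mF \<Phi> ` flags G' then mI \<Phi> f
                         else mF \<Phi> (inv G' (inv_into (flags G') (mF \<Phi>) f)))
                     (outer G - mF \<Phi> ` outer G') \<rparr>"

end

theory Submission
imports Defs
begin

lemma graph_bd: "is_graph G \<Longrightarrow> f \<in> flags G \<Longrightarrow> bd G f \<in> verts G"
  unfolding is_graph_def by auto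
lemma graph_inv: "is_graph G \<Longrightarrow> f \<in> flags G \<Longrightarrow> inv G f \<in> flags G"
  unfolding is_graph_def by auto
lemma graph_invinv: "is_graph G \<Longrightarrow> f \<in> flags G \<Longrightarrow> inv G (inv G f) = f"
  unfolding is_graph_def by auto

lemma conn_sym: "(u,v) \<in> conn G \<Longrightarrow> (v,u) \<in> conn G"
proof -
  have "sym (adj G \<union> (adj G)\<inverse> \<union> Id_on (verts G))"
    by (metis sym_Id_on sym_Un sym_Un_converse)
  hence "sym (conn G)" unfolding conn_def by (rule sym_rtrancl)
  thus "(u,v) \<in> conn G \<Longrightarrow> (v,u) \<in> conn G" by (meson symD)
qed

lemma conn_trans: "(u,v) \<in> conn G \<Longrightarrow> (v,w) \<in> conn G \<Longrightarrow> (u,w) \<in> conn G"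
  unfolding conn_def by auto

lemma conn_refl: "(u,u) \<in> conn G" unfolding conn_def by auto

lemma adj_conn: "f \<in> flags G \<Longrightarrow> (bd G f, bd G (inv G f)) \<in> conn G"
  unfolding conn_def adj_def by blast

lemma comp_eq: "(u,v) \<in> conn G \<Longrightarrow> comp_of G u = comp_of G v"
proof -
  assume a: "(u,v) \<in> conn G"
  have "x \<in> conn G `` {u} \<longleftrightarrow> x \<in> conn G `` {v}" for x
    using conn_trans[OF a, of x] conn_trans[OF conn_sym[OF a], of x] by auto
  thus ?thesis unfolding comp_of_def by blast
qed

lemma comp_mem: "v \<in> comp_of G v"
  unfolding comp_of_def by (simp add: conn_refl)

lemma conn_verts: assumes "is_graph G" "(u,v) \<in> conn G" "u \<in> verts G" shows "v \<in> verts G"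
  using assms(2,3) unfolding conn_def
proof (induction rule: rtrancl_induct)
  case base thus ?case by simp
next
  case (step y z)
  thus ?case using graph_bd[OF assms(1)] graph_inv[OF assms(1)]
    unfolding adj_def by auto
qed

lemma comp_some: assumes "is_graph G" "v \<in> verts G"
  shows "(SOME u. u \<in> comp_of G v) \<in> verts G \<and> comp_of G (SOME u. u \<in> comp_of G v) = comp_of G v
    \<and> (v, (SOME u. u \<in> comp_of G v)) \<in> conn G"
proof -
  have "(SOME u. u \<in> comp_of G v) \<in> comp_of G v" by (rule someI, rule comp_mem)
  hence c: "(v, (SOME u. u \<in> comp_of G v)) \<in> conn G" unfolding comp_of_def by auto
  thus ?thesis using conn_verts[OF assms(1) c assms(2)] comp_eq[OF c] by auto
qed

lemma morD:
  assumes "is_morphism G G' \<phi>"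
  shows morV: "mV \<phi> \<in> verts G \<rightarrow>\<^sub>E verts G'"
    and morVs: "mV \<phi> ` verts G = verts G'"
    and morF: "mF \<phi> \<in> flags G' \<rightarrow>\<^sub>E flags G"
    and morFi: "inj_on (mF \<phi>) (flags G')"
    and morI: "mI \<phi> \<in> (flags G - mF \<phi> ` flags G') \<rightarrow>\<^sub>E (flags G - mF \<phi> ` flags G')"
    and morI2: "\<forall>f\<in>flags G - mF \<phi> ` flags G'. mI \<phi> f \<noteq> f \<and> mI \<phi> (mI \<phi> f) = f"
    and morB: "\<forall>f'\<in>flags G'. mV \<phi> (bd G (mF \<phi> f')) = bd G' f'"
    and morB2: "\<forall>f\<in>flags G - mF \<phi> ` flags G'. mV \<phi> (bd G f) = mV \<phi> (bd G (mI \<phi> f))"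
    and morii: "\<forall>f\<in>flags G - mF \<phi> ` flags G'. (inv G f \<noteq> f \<and> mI \<phi> f = inv G f)
               \<or> (inv G f = f \<and> inv G (mI \<phi> f) = mI \<phi> f)"
    and moriii: "\<forall>f'\<in>flags G'. inv G (mF \<phi> f') \<noteq> mF \<phi> f' \<longrightarrow>
                        inv G (mF \<phi> f') = mF \<phi> (inv G' f')"
  using assms by (simp_all add: is_morphism_def Let_def)

lemma morI_intro:
  assumes "mV \<phi> \<in> verts G \<rightarrow>\<^sub>E verts G'"
    and "mV \<phi> ` verts G = verts G'"
    and "mF \<phi> \<in> flags G' \<rightarrow>\<^sub>E flags G"
    and "inj_on (mF \<phi>) (flags G')"
    and "mI \<phi> \<in> (flags G - mF \<phi> ` flags G') \<rightarrow>\<^sub>E (flags G - mF \<phi> ` flags G')"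
    and "\<forall>f\<in>flags G - mF \<phi> ` flags G'. mI \<phi> f \<noteq> f \<and> mI \<phi> (mI \<phi> f) = f"
    and "\<forall>f'\<in>flags G'. mV \<phi> (bd G (mF \<phi> f')) = bd G' f'"
    and "\<forall>f\<in>flags G - mF \<phi> ` flags G'. mV \<phi> (bd G f) = mV \<phi> (bd G (mI \<phi> f))"
    and "\<forall>f\<in>flags G - mF \<phi> ` flags G'. (inv G f \<noteq> f \<and> mI \<phi> f = inv G f)
               \<or> (inv G f = f \<and> inv G (mI \<phi> f) = mI \<phi> f)"
    and "\<forall>f'\<in>flags G'. inv G (mF \<phi> f') \<noteq> mF \<phi> f' \<longrightarrow>
                        inv G (mF \<phi> f') = mF \<phi> (inv G' f')"
  shows "is_morphism G G' \<phi>"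
  using assms by (simp add: is_morphism_def Let_def)

lemma mor_adj:
  assumes "is_morphism G G' \<Phi>" "is_graph G'" "f \<in> flags G"
  shows "(mV \<Phi> (bd G f), mV \<Phi> (bd G (inv G f))) \<in> conn G'"
proof (cases "inv G f = f")
  case True thus ?thesis by (simp add: conn_refl)
next
  case False
  show ?thesis
  proof (cases "f \<in> mF \<Phi> ` flags G'")
    case True
    then obtain f' where f': "f' \<in> flags G'" "f = mF \<Phi> f'" by auto
    have "inv G f = mF \<Phi> (inv G' f')" using moriii[OF assms(1)] False f' by auto
    moreover have "inv G' f' \<in> flags G'" using graph_inv[OF assms(2) f'(1)] .
    ultimately show ?thesis using morB[OF assms(1)] f' graph_inv[OF assms(2)] adj_conn[OF f'(1)]
      by auto
  next
    case nt: False
    hence "mI \<Phi> f = inv G f" using morii[OF assms(1)] assms(3) False by auto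
    hence "mV \<Phi> (bd G f) = mV \<Phi> (bd G (inv G f))" using morB2[OF assms(1)] assms(3) nt by auto
    thus ?thesis by (simp add: conn_refl)
  qed
qed

lemma mor_conn:
  assumes "is_morphism G G' \<Phi>" "is_graph G'" "is_graph G" "(u,v) \<in> conn G"
  shows "(mV \<Phi> u, mV \<Phi> v) \<in> conn G'"
  using assms(4) unfolding conn_def[of G]
proof (induction rule: rtrancl_induct)
  case base thus ?case by (simp add: conn_refl)
next
  case (step y z)
  have "(mV \<Phi> y, mV \<Phi> z) \<in> conn G'"
    using step(2)
  proof (elim UnE)
    assume "(y,z) \<in> adj G"
    then obtain f where f: "f \<in> flags G" "y = bd G f" "z = bd G (inv G f)" unfolding adj_def by auto
    show ?thesis unfolding f(2,3) by (rule mor_adj[OF assms(1,2) f(1)])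
  next
    assume "(y,z) \<in> (adj G)\<inverse>"
    then obtain f where f: "f \<in> flags G" "z = bd G f" "y = bd G (inv G f)" unfolding adj_def by auto
    show ?thesis unfolding f(2,3) by (rule conn_sym, rule mor_adj[OF assms(1,2) f(1)])
  next
    assume "(y,z) \<in> Id_on (verts G)" hence "y = z" by auto
    thus ?thesis by (simp add: conn_refl)
  qed
  thus ?case by (rule conn_trans[OF step(3)])
qed

lemma tmor_V:
  assumes "is_morphism G G' \<Phi>" "is_graph G'" "is_graph G" "v \<in> verts G"
  shows "mV (tmor G G' \<Phi>) (comp_of G v) = comp_of G' (mV \<Phi> v)"
proof -
  have "comp_of G v \<in> components G" using assms(4) unfolding components_def by auto
  hence "mV (tmor G G' \<Phi>) (comp_of G v) = comp_of G' (mV \<Phi> (SOME u. u \<in> comp_of G v))"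
    by (simp add: tmor_def)
  also have "\<dots> = comp_of G' (mV \<Phi> v)"
  proof -
    have "(v, SOME u. u \<in> comp_of G v) \<in> conn G" using comp_some[OF assms(3,4)] by blast
    hence "(mV \<Phi> v, mV \<Phi> (SOME u. u \<in> comp_of G v)) \<in> conn G'" by (rule mor_conn[OF assms(1,2,3)])
    thus ?thesis using comp_eq by metis
  qed
  finally show ?thesis .
qed


definition tI :: "('f1, 'v1) graph \<Rightarrow> ('f2, 'v2) graph \<Rightarrow> ('v1, 'v2, 'f1, 'f2) gmor \<Rightarrow> 'f1 \<Rightarrow> 'f1" where
  "tI G G' \<Phi> f = (if f \<notin> mF \<Phi> ` flags G' then mI \<Phi> f
                         else mF \<Phi> (inv G' (inv_into (flags G') (mF \<Phi>) f)))"

lemma tmor_simps: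
  "mV (tmor G G' \<Phi>) = restrict (\<lambda>C. comp_of G' (mV \<Phi> (SOME v. v \<in> C))) (components G)"
  "mF (tmor G G' \<Phi>) = restrict (mF \<Phi>) (outer G')"
  "mI (tmor G G' \<Phi>) = restrict (tI G G' \<Phi>) (outer G - mF \<Phi> ` outer G')"
  unfolding tmor_def by (simp_all add: restrict_def tI_def fun_eq_iff)

lemma quot_simps:
  "flags (quot G) = outer G" "verts (quot G) = components G"
  "bd (quot G) = (\<lambda>f. comp_of G (bd G f))" "inv (quot G) = id"
  by (simp_all add: quot_def)

lemma mor_outer:
  assumes "is_graph G'" "is_morphism G G' \<Phi>" "f' \<in> outer G'"
  shows "mF \<Phi> f' \<in> outer G"
proof -
  have f': "f' \<in> flags G'" "inv G' f' = f'" using assms(3) unfolding outer_def by auto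
  have "mF \<Phi> f' \<in> flags G" using morF[OF assms(2)] f'(1) by auto
  moreover have "inv G (mF \<Phi> f') = mF \<Phi> f'"
  proof (rule ccontr)
    assume "inv G (mF \<Phi> f') \<noteq> mF \<Phi> f'"
    hence "inv G (mF \<Phi> f') = mF \<Phi> (inv G' f')" using moriii[OF assms(2)] f'(1) by auto
    thus False using f'(2) \<open>inv G (mF \<Phi> f') \<noteq> mF \<Phi> f'\<close> by simp
  qed
  ultimately show ?thesis unfolding outer_def by auto
qed

lemma tI_props:
  assumes gG: "is_graph G" and gG': "is_graph G'" and m: "is_morphism G G' \<Phi>"
    and fo: "f \<in> outer G" and fn: "f \<notin> mF \<Phi> ` outer G'"
  shows "tI G G' \<Phi> f \<in> outer G \<and> tI G G' \<Phi> f \<notin> mF \<Phi> ` outer G' \<and> tI G G' \<Phi> f \<noteq> f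
     \<and> tI G G' \<Phi> (tI G G' \<Phi> f) = f \<and> (mV \<Phi> (bd G f), mV \<Phi> (bd G (tI G G' \<Phi> f))) \<in> conn G'"
proof (cases "f \<in> mF \<Phi> ` flags G'")
  case False
  have fX: "f \<in> flags G - mF \<Phi> ` flags G'" "inv G f = f" using fo False unfolding outer_def by auto
  define g where "g = mI \<Phi> f"
  have gX: "g \<in> flags G - mF \<Phi> ` flags G'" using morI[OF m] fX(1) unfolding g_def by auto
  have gf: "g \<noteq> f" "mI \<Phi> g = f" using morI2[OF m] fX(1) unfolding g_def by auto
  have "inv G g = g" using morii[OF m] fX unfolding g_def by auto
  hence go: "g \<in> outer G" using gX unfolding outer_def by auto
  have t1: "tI G G' \<Phi> f = g" using False unfolding tI_def g_def by simp
  have t2: "tI G G' \<Phi> g = f" using gX gf unfolding tI_def by simp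
  have "mV \<Phi> (bd G f) = mV \<Phi> (bd G g)" using morB2[OF m] fX(1) unfolding g_def by auto
  moreover have "g \<notin> mF \<Phi> ` outer G'" using gX unfolding outer_def by auto
  ultimately show ?thesis using t1 t2 go gf conn_refl by auto
next
  case True
  then obtain f' where f': "f' \<in> flags G'" "f = mF \<Phi> f'" by auto
  have inj: "inj_on (mF \<Phi>) (flags G')" by (rule morFi[OF m])
  have fo': "f' \<notin> outer G'" using fn f' by auto
  hence ninv: "inv G' f' \<noteq> f'" using f' unfolding outer_def by auto
  have fo2: "inv G f = f" using fo unfolding outer_def by auto
  define h where "h = inv G' f'"
  have hF: "h \<in> flags G'" using graph_inv[OF gG' f'(1)] unfolding h_def .
  have hh: "inv G' h = f'" using graph_invinv[OF gG' f'(1)] unfolding h_def .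
  have hin: "h \<noteq> f'" using ninv unfolding h_def .
  have ii: "inv_into (flags G') (mF \<Phi>) f = f'" using inv_into_f_f[OF inj f'(1)] f'(2) by simp
  define g where "g = mF \<Phi> h"
  have t1: "tI G G' \<Phi> f = g" using True ii unfolding tI_def g_def h_def by simp
  have gF: "g \<in> flags G" using morF[OF m] hF unfolding g_def by auto
  have gouter: "inv G g = g"
  proof (rule ccontr)
    assume ng: "inv G g \<noteq> g"
    hence "inv G g = mF \<Phi> (inv G' h)" using moriii[OF m] hF unfolding g_def by auto
    hence "inv G g = f" using hh f'(2) by simp
    hence "inv G f = g" using graph_invinv[OF gG gF] by simp
    hence "g = f" using fo2 by simp
    thus False using ng fo2 by simp
  qed
  have go: "g \<in> outer G" using gF gouter unfolding outer_def by auto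
  have gn: "g \<notin> mF \<Phi> ` outer G'"
  proof
    assume "g \<in> mF \<Phi> ` outer G'"
    then obtain k where k: "k \<in> outer G'" "g = mF \<Phi> k" by auto
    hence "k = h" using inj hF unfolding g_def outer_def by (auto dest: inj_onD)
    thus False using k(1) hh hin unfolding outer_def by auto
  qed
  have gf: "g \<noteq> f" using inj hF f'(1) hin f'(2) unfolding g_def by (auto dest: inj_onD)
  have ii2: "inv_into (flags G') (mF \<Phi>) g = h" using inv_into_f_f[OF inj hF] unfolding g_def by simp
  have t2: "tI G G' \<Phi> g = f" using ii2 hF hh f'(2) unfolding tI_def g_def by auto
  have "(bd G' f', bd G' (inv G' f')) \<in> conn G'" by (rule adj_conn[OF f'(1)])
  moreover have "mV \<Phi> (bd G f) = bd G' f'" using morB[OF m] f' by auto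
  moreover have "mV \<Phi> (bd G g) = bd G' (inv G' f')" using morB[OF m] hF unfolding g_def h_def by auto
  ultimately show ?thesis using t1 t2 go gn gf by auto
qed


lemma image_restrict_same: "restrict h A ` A = h ` A"
  by (auto simp: restrict_def)

lemma forward_quot:
  assumes gG: "is_graph G" and gG': "is_graph G'" and m: "is_morphism G G' \<Phi>"
  shows "is_morphism (quot G) (quot G') (tmor G G' \<Phi>)"
proof (rule morI_intro, simp_all only: quot_simps tmor_simps image_restrict_same)
  have Cv: "C \<in> components G \<Longrightarrow> \<exists>v\<in>verts G. C = comp_of G v" for C
    unfolding components_def by auto
  have tV: "v \<in> verts G \<Longrightarrow> mV (tmor G G' \<Phi>) (comp_of G v) = comp_of G' (mV \<Phi> v)" for v
    by (rule tmor_V[OF m gG' gG])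
  have mVv: "v \<in> verts G \<Longrightarrow> mV \<Phi> v \<in> verts G'" for v using morV[OF m] by auto
  show "restrict (\<lambda>C. comp_of G' (mV \<Phi> (SOME v. v \<in> C))) (components G) \<in> components G \<rightarrow>\<^sub>E components G'"
  proof
    fix C assume "C \<in> components G"
    then obtain v where v: "v \<in> verts G" "C = comp_of G v" using Cv by blast
    have "restrict (\<lambda>C. comp_of G' (mV \<Phi> (SOME v. v \<in> C))) (components G) C = comp_of G' (mV \<Phi> v)"
      using tV[OF v(1)] v(2) by (simp add: tmor_simps)
    thus "restrict (\<lambda>C. comp_of G' (mV \<Phi> (SOME v. v \<in> C))) (components G) C \<in> components G'"
      using mVv[OF v(1)] unfolding components_def by auto
  qed auto
  show "(\<lambda>C. comp_of G' (mV \<Phi> (SOME v. v \<in> C))) ` components G = components G'"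
  proof
    show "(\<lambda>C. comp_of G' (mV \<Phi> (SOME v. v \<in> C))) ` components G \<subseteq> components G'"
    proof
      fix D assume "D \<in> (\<lambda>C. comp_of G' (mV \<Phi> (SOME v. v \<in> C))) ` components G"
      then obtain C where C: "C \<in> components G" "D = comp_of G' (mV \<Phi> (SOME v. v \<in> C))" by auto
      then obtain v where v: "v \<in> verts G" "C = comp_of G v" using Cv by blast
      have "D = comp_of G' (mV \<Phi> v)" using tV[OF v(1)] v(2) C by (simp add: tmor_simps)
      thus "D \<in> components G'" using mVv[OF v(1)] unfolding components_def by auto
    qed
  next
    show "components G' \<subseteq> (\<lambda>C. comp_of G' (mV \<Phi> (SOME v. v \<in> C))) ` components G"
    proof
      fix D assume "D \<in> components G'"
      then obtain w where w: "w \<in> verts G'" "D = comp_of G' w" unfolding components_def by auto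
      then obtain v where v: "v \<in> verts G" "w = mV \<Phi> v" using morVs[OF m] by auto
      have "comp_of G v \<in> components G" using v(1) unfolding components_def by auto
      moreover have "(\<lambda>C. comp_of G' (mV \<Phi> (SOME v. v \<in> C))) (comp_of G v) = D"
        using tV[OF v(1)] v(2) w(2) calculation by (simp add: tmor_simps)
      ultimately show "D \<in> (\<lambda>C. comp_of G' (mV \<Phi> (SOME v. v \<in> C))) ` components G"
        by (metis image_eqI)
    qed
  qed
  show "restrict (mF \<Phi>) (outer G') \<in> outer G' \<rightarrow>\<^sub>E outer G"
    using mor_outer[OF gG' m] by auto
  show "inj_on (restrict (mF \<Phi>) (outer G')) (outer G')"
    using morFi[OF m] unfolding inj_on_def outer_def by auto
  let ?X = "outer G - mF \<Phi> ` outer G'"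
  have P: "f \<in> ?X \<Longrightarrow> tI G G' \<Phi> f \<in> outer G \<and> tI G G' \<Phi> f \<notin> mF \<Phi> ` outer G' \<and> tI G G' \<Phi> f \<noteq> f
     \<and> tI G G' \<Phi> (tI G G' \<Phi> f) = f \<and> (mV \<Phi> (bd G f), mV \<Phi> (bd G (tI G G' \<Phi> f))) \<in> conn G'" for f
    using tI_props[OF gG gG' m] by auto
  show "restrict (tI G G' \<Phi>) ?X \<in> ?X \<rightarrow>\<^sub>E ?X" using P by auto
  show "\<forall>f\<in>?X. restrict (tI G G' \<Phi>) ?X f \<noteq> f \<and> restrict (tI G G' \<Phi>) ?X (restrict (tI G G' \<Phi>) ?X f) = f"
    using P by auto
  have bdv: "f \<in> flags G \<Longrightarrow> bd G f \<in> verts G" for f by (rule graph_bd[OF gG])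
  have tV': "f \<in> flags G \<Longrightarrow> restrict (\<lambda>C. comp_of G' (mV \<Phi> (SOME v. v \<in> C))) (components G) (comp_of G (bd G f)) = comp_of G' (mV \<Phi> (bd G f))" for f
    using tV[OF bdv] by (simp add: tmor_simps)
  show "\<forall>f'\<in>outer G'. restrict (\<lambda>C. comp_of G' (mV \<Phi> (SOME v. v \<in> C))) (components G) (comp_of G (bd G (restrict (mF \<Phi>) (outer G') f'))) = comp_of G' (bd G' f')"
  proof
    fix f' assume f': "f' \<in> outer G'"
    have "mF \<Phi> f' \<in> flags G" using mor_outer[OF gG' m f'] unfolding outer_def by auto
    moreover have "mV \<Phi> (bd G (mF \<Phi> f')) = bd G' f'" using morB[OF m] f' unfolding outer_def by auto
    ultimately show "restrict (\<lambda>C. comp_of G' (mV \<Phi> (SOME v. v \<in> C))) (components G) (comp_of G (bd G (restrict (mF \<Phi>) (outer G') f'))) = comp_of G' (bd G' f')"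
      using tV' f' by simp
  qed
  show "\<forall>f\<in>?X. restrict (\<lambda>C. comp_of G' (mV \<Phi> (SOME v. v \<in> C))) (components G) (comp_of G (bd G f)) =
      restrict (\<lambda>C. comp_of G' (mV \<Phi> (SOME v. v \<in> C))) (components G) (comp_of G (bd G (restrict (tI G G' \<Phi>) ?X f)))"
  proof
    fix f assume f: "f \<in> ?X"
    have fF: "f \<in> flags G" "tI G G' \<Phi> f \<in> flags G" using f P[OF f] unfolding outer_def by auto
    have "comp_of G' (mV \<Phi> (bd G f)) = comp_of G' (mV \<Phi> (bd G (tI G G' \<Phi> f)))"
      using P[OF f] by (intro comp_eq) blast
    thus "restrict (\<lambda>C. comp_of G' (mV \<Phi> (SOME v. v \<in> C))) (components G) (comp_of G (bd G f)) =
      restrict (\<lambda>C. comp_of G' (mV \<Phi> (SOME v. v \<in> C))) (components G) (comp_of G (bd G (restrict (tI G G' \<Phi>) ?X f)))"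
      using tV'[OF fF(1)] tV'[OF fF(2)] f by simp
  qed
qed auto


lemma agg_simps: "flags (agg G) = flags G" "verts (agg G) = verts G" "bd (agg G) = bd G" "inv (agg G) = id"
  by (simp_all add: agg_def)

lemma forward_agg:
  assumes m: "is_morphism G G' \<Phi>"
  shows "is_morphism (agg G) (agg G') \<Phi>"
  by (rule morI_intro, simp_all only: agg_simps id_apply)
     (use morD[OF m] in auto)

lemma restrict_id_image: "S \<subseteq> A \<Longrightarrow> restrict id A ` S = S"
  by (auto simp: restrict_def)

lemma outer_flags: "outer G \<subseteq> flags G" and inner_flags: "inner G \<subseteq> flags G"
  and flags_minus_outer: "flags G - outer G = inner G"
  and flags_minus_inner: "flags G - inner G = outer G"
  by (auto simp: outer_def inner_def)

lemma LHS_V: "mV (gcomp (agg G) (quot G) (quot G') R (vmor G)) = restrict (\<lambda>v. mV R (comp_of G v)) (verts G)"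
  by (simp add: gcomp_def vmor_def agg_simps fun_eq_iff)

lemma LHS_F: "mF (gcomp (agg G) (quot G) (quot G') R (vmor G)) = restrict (\<lambda>f'. restrict id (outer G) (mF R f')) (outer G')"
  by (simp add: gcomp_def vmor_def quot_simps fun_eq_iff)

lemma LHS_I: "mI (gcomp (agg G) (quot G) (quot G') R (vmor G)) =
   (\<lambda>f. if f \<in> inner G then inv G f else if f \<in> outer G - mF R ` outer G' then restrict id (outer G) (mI R f) else undefined)"
proof -
  have e1: "flags G - restrict id (outer G) ` outer G = inner G"
    using restrict_id_image[of "outer G" "outer G"] flags_minus_outer by simp
  have e2: "restrict id (outer G) ` (outer G - mF R ` outer G') = outer G - mF R ` outer G'"
    by (rule restrict_id_image) auto
  have e3: "f \<in> outer G \<Longrightarrow> inv_into (outer G) (restrict id (outer G)) f = f" for f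
    using inv_into_f_f[of "restrict id (outer G)" "outer G" f] by (simp add: inj_on_def)
  show ?thesis
  proof -
    have io: "\<And>f. f \<in> inner G \<Longrightarrow> f \<notin> outer G" by (auto simp: inner_def outer_def)
    show ?thesis
      unfolding gcomp_def vmor_def gmor.select_convs agg_simps quot_simps e1 e2
      using e3 io by (intro ext) (auto simp: restrict_def)
  qed
qed

lemma RHS_V: "mV (gcomp (agg G) (agg G') (quot G') (vmor G') L) = restrict (\<lambda>v. restrict (comp_of G') (verts G') (mV L v)) (verts G)"
  by (simp add: gcomp_def vmor_def agg_simps fun_eq_iff)

lemma RHS_F: "mF (gcomp (agg G) (agg G') (quot G') (vmor G') L) = restrict (mF L) (outer G')"
  by (simp add: gcomp_def vmor_def quot_simps fun_eq_iff)

lemma RHS_I: assumes inj: "inj_on (mF L) (flags G')"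
  shows "mI (gcomp (agg G) (agg G') (quot G') (vmor G') L) =
   (\<lambda>f. if f \<in> flags G - mF L ` flags G' then mI L f else if f \<in> mF L ` inner G'
         then mF L (inv G' (inv_into (flags G') (mF L) f)) else undefined)"
proof -
  have e1: "flags G' - restrict id (outer G') ` outer G' = inner G'"
    using restrict_id_image[of "outer G'" "outer G'"] flags_minus_outer by simp
  have e3: "f \<in> mF L ` inner G' \<Longrightarrow> inv_into (flags G') (mF L) f \<in> inner G'" for f
    using inv_into_f_f[OF inj] inner_flags by fastforce
  show ?thesis
      unfolding gcomp_def vmor_def gmor.select_convs agg_simps quot_simps e1
      using e3 by (intro ext) (auto simp: restrict_def)
qed


lemma forward_square:
  assumes gG: "is_graph G" and gG': "is_graph G'" and m: "is_morphism G G' \<Phi>"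
  shows "gcomp (agg G) (quot G) (quot G') (tmor G G' \<Phi>) (vmor G) = gcomp (agg G) (agg G') (quot G') (vmor G') \<Phi>"
proof (rule gmor.equality)
  show "mV (gcomp (agg G) (quot G) (quot G') (tmor G G' \<Phi>) (vmor G)) = mV (gcomp (agg G) (agg G') (quot G') (vmor G') \<Phi>)"
    unfolding LHS_V RHS_V
  proof (rule ext)
    fix v show "restrict (\<lambda>v. mV (tmor G G' \<Phi>) (comp_of G v)) (verts G) v = restrict (\<lambda>v. restrict (comp_of G') (verts G') (mV \<Phi> v)) (verts G) v"
      using tmor_V[OF m gG' gG, of v] morV[OF m] by auto
  qed
  show "mF (gcomp (agg G) (quot G) (quot G') (tmor G G' \<Phi>) (vmor G)) = mF (gcomp (agg G) (agg G') (quot G') (vmor G') \<Phi>)"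
    unfolding LHS_F RHS_F tmor_simps
    using mor_outer[OF gG' m] by (intro ext) (auto simp: restrict_def)
  have inj: "inj_on (mF \<Phi>) (flags G')" by (rule morFi[OF m])
  show "mI (gcomp (agg G) (quot G) (quot G') (tmor G G' \<Phi>) (vmor G)) = mI (gcomp (agg G) (agg G') (quot G') (vmor G') \<Phi>)"
    unfolding LHS_I RHS_I[OF inj] tmor_simps image_restrict_same
  proof (rule ext)
    fix f
    let ?X = "outer G - mF \<Phi> ` outer G'"
    show "(if f \<in> inner G then inv G f else if f \<in> ?X then restrict id (outer G) (restrict (tI G G' \<Phi>) ?X f) else undefined)
       = (if f \<in> flags G - mF \<Phi> ` flags G' then mI \<Phi> f else if f \<in> mF \<Phi> ` inner G'
         then mF \<Phi> (inv G' (inv_into (flags G') (mF \<Phi>) f)) else undefined)"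
    proof (cases "f \<in> inner G")
      case True
      hence fF: "f \<in> flags G" "inv G f \<noteq> f" unfolding inner_def by auto
      show ?thesis
      proof (cases "f \<in> mF \<Phi> ` flags G'")
        case False
        hence "mI \<Phi> f = inv G f" using morii[OF m] fF by auto
        thus ?thesis using True False fF by auto
      next
        case c: True
        then obtain f' where f': "f' \<in> flags G'" "f = mF \<Phi> f'" by auto
        have "f' \<notin> outer G'" using mor_outer[OF gG' m] f'(2) fF unfolding outer_def by auto
        hence "f' \<in> inner G'" using f'(1) unfolding outer_def inner_def by auto
        moreover have "inv G f = mF \<Phi> (inv G' f')" using moriii[OF m] f' fF by auto
        moreover have "inv_into (flags G') (mF \<Phi>) f = f'" using inv_into_f_f[OF inj f'(1)] f'(2) by simp
        ultimately show ?thesis using True c f' by auto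
      qed
    next
      case ni: False
      show ?thesis
      proof (cases "f \<in> ?X")
        case True
        have P: "tI G G' \<Phi> f \<in> outer G" using tI_props[OF gG gG' m] True by auto
        have fF: "f \<in> flags G" using True outer_flags[of G] by auto
        show ?thesis
        proof (cases "f \<in> mF \<Phi> ` flags G'")
          case False thus ?thesis using ni True P fF by (auto simp: tI_def)
        next
          case c: True
          then obtain f' where f': "f' \<in> flags G'" "f = mF \<Phi> f'" by auto
          have "f' \<notin> outer G'" using True f' by auto
          hence "f' \<in> inner G'" using f'(1) unfolding outer_def inner_def by auto
          thus ?thesis using ni True P c f' by (auto simp: tI_def)
        qed
      next
        case False
        have l: "f \<notin> flags G - mF \<Phi> ` flags G'"
          using ni False outer_flags[of G'] unfolding inner_def outer_def by auto
        have r: "f \<notin> mF \<Phi> ` inner G'"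
        proof
          assume "f \<in> mF \<Phi> ` inner G'"
          then obtain j where j: "j \<in> inner G'" "f = mF \<Phi> j" by auto
          have jF: "j \<in> flags G'" using j inner_flags[of G'] by auto
          have fo: "f \<in> outer G" using mor_outer[OF gG' m] ni j jF morF[OF m]
            unfolding inner_def outer_def by auto
          then obtain k where k: "k \<in> outer G'" "f = mF \<Phi> k" using False by auto
          have "k = j" using inj_onD[OF inj] k j jF outer_flags[of G'] by auto
          thus False using k j unfolding inner_def outer_def by auto
        qed
        show ?thesis using ni False l r by auto
      qed
    qed
  qed
qed simp


lemma backward:
  assumes gG: "is_graph G" and gG': "is_graph G'"
    and mL: "is_morphism (agg G) (agg G') L" and mR: "is_morphism (quot G) (quot G') R"
    and sq: "gcomp (agg G) (quot G) (quot G') R (vmor G) = gcomp (agg G) (agg G') (quot G') (vmor G') L"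
  shows "is_morphism G G' L \<and> tmor G G' L = R"
proof -
  note L1 = morD[OF mL, unfolded agg_simps]
  note R1 = morD[OF mR, unfolded quot_simps]
  have inj: "inj_on (mF L) (flags G')" by (rule L1(4))
  have sV: "restrict (\<lambda>v. mV R (comp_of G v)) (verts G) = restrict (\<lambda>v. restrict (comp_of G') (verts G') (mV L v)) (verts G)"
    using arg_cong[OF sq, of mV] unfolding LHS_V RHS_V .
  have sF: "restrict (\<lambda>f'. restrict id (outer G) (mF R f')) (outer G') = restrict (mF L) (outer G')"
    using arg_cong[OF sq, of mF] unfolding LHS_F RHS_F .
  have sI: "(if f \<in> inner G then inv G f else if f \<in> outer G - mF R ` outer G' then restrict id (outer G) (mI R f) else undefined)
     = (if f \<in> flags G - mF L ` flags G' then mI L f else if f \<in> mF L ` inner G'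
         then mF L (inv G' (inv_into (flags G') (mF L) f)) else undefined)" for f
    using fun_cong[OF arg_cong[OF sq, of mI], of f] unfolding LHS_I RHS_I[OF inj] .
  have FO: "f' \<in> outer G' \<Longrightarrow> mF L f' = mF R f' \<and> mF R f' \<in> outer G" for f'
  proof -
    assume f': "f' \<in> outer G'"
    have "mF R f' \<in> outer G" using R1(3) f' by auto
    thus ?thesis using fun_cong[OF sF, of f'] f' by auto
  qed
  have imgeq: "mF R ` outer G' = mF L ` outer G'" using FO by (auto simp: image_def)
  have io: "\<And>f G. f \<in> inner G \<Longrightarrow> f \<notin> outer G" by (auto simp: inner_def outer_def)
  have fl: "\<And>f G. f \<in> flags G \<Longrightarrow> f \<in> inner G \<or> f \<in> outer G" by (auto simp: inner_def outer_def)
  let ?X = "outer G - mF L ` outer G'"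
  have RI: "mI R \<in> ?X \<rightarrow>\<^sub>E ?X" using R1(5) imgeq by simp
  have key: "f \<in> ?X \<Longrightarrow> mI R f = tI G G' L f" for f
  proof -
    assume f: "f \<in> ?X"
    have fF: "f \<in> flags G" using f outer_flags[of G] by auto
    have "mI R f \<in> outer G" using RI f by auto
    hence lhs: "mI R f = (if f \<in> flags G - mF L ` flags G' then mI L f else if f \<in> mF L ` inner G'
         then mF L (inv G' (inv_into (flags G') (mF L) f)) else undefined)"
    proof -
      have a: "f \<notin> inner G" using f io[of f G] by auto
      have b: "f \<in> outer G - mF R ` outer G'" using f imgeq by simp
      show ?thesis using sI[of f] a b \<open>mI R f \<in> outer G\<close> by simp
    qed
    show ?thesis
    proof (cases "f \<in> mF L ` flags G'")
      case False thus ?thesis using lhs fF by (simp add: tI_def)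
    next
      case True
      then obtain f' where f': "f' \<in> flags G'" "f = mF L f'" by auto
      hence "f' \<in> inner G'" using f fl[of f' G'] by auto
      thus ?thesis using lhs f' True by (auto simp: tI_def)
    qed
  qed
  have isL: "is_morphism G G' L"
  proof (rule morI_intro)
    show "mV L \<in> verts G \<rightarrow>\<^sub>E verts G'" "mV L ` verts G = verts G'" "mF L \<in> flags G' \<rightarrow>\<^sub>E flags G"
      "inj_on (mF L) (flags G')" "mI L \<in> flags G - mF L ` flags G' \<rightarrow>\<^sub>E flags G - mF L ` flags G'"
      "\<forall>f\<in>flags G - mF L ` flags G'. mI L f \<noteq> f \<and> mI L (mI L f) = f"
      "\<forall>f'\<in>flags G'. mV L (bd G (mF L f')) = bd G' f'"
      "\<forall>f\<in>flags G - mF L ` flags G'. mV L (bd G f) = mV L (bd G (mI L f))"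
      using L1 by auto
    show "\<forall>f\<in>flags G - mF L ` flags G'. (inv G f \<noteq> f \<and> mI L f = inv G f)
               \<or> (inv G f = f \<and> inv G (mI L f) = mI L f)"
    proof
      fix f assume f: "f \<in> flags G - mF L ` flags G'"
      show "(inv G f \<noteq> f \<and> mI L f = inv G f) \<or> (inv G f = f \<and> inv G (mI L f) = mI L f)"
      proof (cases "f \<in> inner G")
        case True
        hence "mI L f = inv G f" using sI[of f] f by auto
        thus ?thesis using True unfolding inner_def by auto
      next
        case False
        hence fo: "f \<in> outer G" using f fl[of f G] by auto
        hence fX: "f \<in> ?X" using f outer_flags[of G'] by auto
        have "mI R f \<in> outer G" using RI fX by auto
        hence "mI L f = mI R f" using sI[of f] fX False f imgeq by auto
        hence "mI L f \<in> outer G" using \<open>mI R f \<in> outer G\<close> by simp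
        thus ?thesis using fo unfolding outer_def by auto
      qed
    qed
    show "\<forall>f'\<in>flags G'. inv G (mF L f') \<noteq> mF L f' \<longrightarrow> inv G (mF L f') = mF L (inv G' f')"
    proof (intro ballI impI)
      fix f' assume f': "f' \<in> flags G'" and ni: "inv G (mF L f') \<noteq> mF L f'"
      have fF: "mF L f' \<in> flags G" using L1(3) f' by auto
      hence fi: "mF L f' \<in> inner G" using ni unfolding inner_def by auto
      have "f' \<notin> outer G'" using FO fi io by metis
      hence f'i: "f' \<in> inner G'" using fl[of f' G'] f' by auto
      have "inv_into (flags G') (mF L) (mF L f') = f'" by (rule inv_into_f_f[OF inj f'])
      thus "inv G (mF L f') = mF L (inv G' f')" using sI[of "mF L f'"] fi f'i f' by auto
    qed
  qed
  have "tmor G G' L = R"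
  proof (rule gmor.equality)
    show "mV (tmor G G' L) = mV R"
    proof (rule ext)
      fix C
      show "mV (tmor G G' L) C = mV R C"
      proof (cases "C \<in> components G")
        case True
        then obtain v where v: "v \<in> verts G" "C = comp_of G v" unfolding components_def by auto
        define s where "s = (SOME u. u \<in> comp_of G v)"
        have s: "s \<in> verts G" "comp_of G s = C" using comp_some[OF gG v(1)] v(2) unfolding s_def by auto
        have "mV L s \<in> verts G'" using L1(1) s(1) by auto
        hence "mV R C = comp_of G' (mV L s)" using fun_cong[OF sV, of s] s by auto
        thus ?thesis using True v(2) by (simp add: tmor_simps s_def)
      next
        case False
        thus ?thesis using R1(1) by (auto simp: tmor_simps PiE_def extensional_def)
      qed
    qed
    show "mF (tmor G G' L) = mF R"
    proof (rule ext)
      fix f' show "mF (tmor G G' L) f' = mF R f'"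
        using FO[of f'] R1(3) by (cases "f' \<in> outer G'") (auto simp: tmor_simps PiE_def extensional_def)
    qed
    show "mI (tmor G G' L) = mI R"
    proof (rule ext)
      fix f show "mI (tmor G G' L) f = mI R f"
        using key[of f] RI by (cases "f \<in> ?X") (auto simp: tmor_simps PiE_def extensional_def)
    qed
  qed simp
  with isL show ?thesis by simp
qed


lemma smor_id: "smor \<Phi> = \<Phi>"
  by (cases \<Phi>) (simp add: smor_def)

theorem proposition2p12:
  fixes G :: "('f, 'v) graph" and G' :: "('g, 'w) graph"
  assumes "is_graph G" and "is_graph G'"
  shows "bij_betw (\<lambda>\<Phi>. (smor \<Phi>, tmor G G' \<Phi>))
           {\<Phi>. is_morphism G G' \<Phi>}
           {(L, R). is_morphism (agg G) (agg G') L
                  \<and> is_morphism (quot G) (quot G') R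
                  \<and> gcomp (agg G) (quot G) (quot G') R (vmor G)
                    = gcomp (agg G) (agg G') (quot G') (vmor G') L}"
  unfolding bij_betw_def
proof
  show "inj_on (\<lambda>\<Phi>. (smor \<Phi>, tmor G G' \<Phi>)) {\<Phi>. is_morphism G G' \<Phi>}"
    by (rule inj_onI) (simp add: smor_id)
  show "(\<lambda>\<Phi>. (smor \<Phi>, tmor G G' \<Phi>)) ` {\<Phi>. is_morphism G G' \<Phi>} =
    {(L, R). is_morphism (agg G) (agg G') L \<and> is_morphism (quot G) (quot G') R
       \<and> gcomp (agg G) (quot G) (quot G') R (vmor G) = gcomp (agg G) (agg G') (quot G') (vmor G') L}"
  proof
    show "(\<lambda>\<Phi>. (smor \<Phi>, tmor G G' \<Phi>)) ` {\<Phi>. is_morphism G G' \<Phi>} \<subseteq>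
      {(L, R). is_morphism (agg G) (agg G') L \<and> is_morphism (quot G) (quot G') R
       \<and> gcomp (agg G) (quot G) (quot G') R (vmor G) = gcomp (agg G) (agg G') (quot G') (vmor G') L}"
      using forward_agg forward_quot[OF assms] forward_square[OF assms] by (auto simp: smor_id)
  next
    show "{(L, R). is_morphism (agg G) (agg G') L \<and> is_morphism (quot G) (quot G') R
       \<and> gcomp (agg G) (quot G) (quot G') R (vmor G) = gcomp (agg G) (agg G') (quot G') (vmor G') L}
      \<subseteq> (\<lambda>\<Phi>. (smor \<Phi>, tmor G G' \<Phi>)) ` {\<Phi>. is_morphism G G' \<Phi>}"
    proof (clarify)
      fix L R
      assume h: "is_morphism (agg G) (agg G') L" "is_morphism (quot G) (quot G') R"
        "gcomp (agg G) (quot G) (quot G') R (vmor G) = gcomp (agg G) (agg G') (quot G') (vmor G') L"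
      have b: "is_morphism G G' L \<and> tmor G G' L = R" by (rule backward[OF assms h])
      show "(L, R) \<in> (\<lambda>\<Phi>. (smor \<Phi>, tmor G G' \<Phi>)) ` {\<Phi>. is_morphism G G' \<Phi>}"
        using b by (auto simp: smor_id image_def)
    qed
  qed
qed

end
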